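(* For all natural numbers $a,b$: - $O_{a+b}\prec E_{a+b}$; - $E_aO_b\prec E_{a+b}$; - $O_aE_b\prec E_{a+b}$; - $O_aO_b\prec O_{a+b}\prec E_aE_b$.
   Context: For natural numbers $c$, $E_c,O_c\in\mathbb{R}[x]$ are defined by $(u+1)^c=E_c(u^2)+uO_c(u^2)$. Relation $\prec$: for $A,B\in\mathbb{R}[x]$ with only real zeros, with zeros $\xi_1\le\cdots\le\xi_a$ of $A$ and $\theta_1\le\cdots\le\theta_b$ of $B$, $A\prec B$ means one of the following: - $\deg B=\deg A+1$ and $\theta_1\le\xi_1\le\theta_2\le\cdots\le\xi_a\le\theta_{a+1}$; - $\deg A=\deg B$ and $\xi_1\le\theta_1\le\cdots\le\xi_a\le\theta_a$. By convention $A\prec0$ and $0\prec A$ for any polynomial $A$ with only real zeros. *)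

theory Defs
  imports "HOL-Computational_Algebra.Polynomial" Complex_Main
begin

text \<open>E_c and O_c, defined by (u+1)^c = E_c(u^2) + u O_c(u^2).
  Here pcompose p [:0,0,1:] is p(u^2).\<close>

definition E_poly :: "nat \<Rightarrow> real poly" where
  "E_poly c = (THE ev. \<exists>od. [:1,1:] ^ c = pcompose ev [:0,0,1:] + [:0,1:] * pcompose od [:0,0,1:])"

definition O_poly :: "nat \<Rightarrow> real poly" where
  "O_poly c = (THE od. \<exists>ev. [:1,1:] ^ c = pcompose ev [:0,0,1:] + [:0,1:] * pcompose od [:0,0,1:])"

text \<open>A real polynomial has only real zeros: every complex zero is real
  (the zero polynomial is handled separately by the convention in prec).\<close>

definition real_rooted :: "real poly \<Rightarrow> bool" where
  "real_rooted p \<longleftrightarrow> (\<forall>z::complex. poly (map_poly of_real p) z = 0 \<longrightarrow> z \<in> \<real>)"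

definition zero_list :: "real poly \<Rightarrow> real list \<Rightarrow> bool" where
  "zero_list p xs \<longleftrightarrow> sorted xs \<and>
     p = smult (lead_coeff p) (\<Prod>x\<leftarrow>xs. [:-x, 1:])"

definition prec :: "real poly \<Rightarrow> real poly \<Rightarrow> bool" (infix "\<prec>\<^sub>p" 50) where
  "A \<prec>\<^sub>p B \<longleftrightarrow>
     (B = 0 \<and> (A = 0 \<or> real_rooted A)) \<or>
     (A = 0 \<and> (B = 0 \<or> real_rooted B)) \<or>
     (A \<noteq> 0 \<and> B \<noteq> 0 \<and> real_rooted A \<and> real_rooted B \<and>
      (\<exists>xs ys. zero_list A xs \<and> zero_list B ys \<and>
        ((degree B = degree A + 1 \<and>
           (\<forall>i<length xs. ys ! i \<le> xs ! i \<and> xs ! i \<le> ys ! (i + 1))) \<or>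
         (degree A = degree B \<and>
           (\<forall>i<length xs. xs ! i \<le> ys ! i \<and>
              (i + 1 < length xs \<longrightarrow> ys ! i \<le> xs ! (i + 1)))))))"

end

theory Submission
  imports Defs
begin


definition EpG :: "nat \<Rightarrow> 'a::comm_ring_1 poly" where
  "EpG c = (\<Sum>k\<le>c. monom (of_nat (c choose (2*k))) k)"
definition OpG :: "nat \<Rightarrow> 'a::comm_ring_1 poly" where
  "OpG c = (\<Sum>k\<le>c. monom (of_nat (c choose (2*k+1))) k)"

lemma coeff_EpG: "coeff (EpG c :: 'a::comm_ring_1 poly) k = of_nat (c choose (2*k))"
  by (auto simp: EpG_def coeff_sum binomial_eq_0)
lemma coeff_OpG: "coeff (OpG c :: 'a::comm_ring_1 poly) k = of_nat (c choose (2*k+1))"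
  by (auto simp: OpG_def coeff_sum binomial_eq_0)

lemma poly_EpG_0: "poly (EpG c :: 'a::comm_ring_1 poly) 0 = 1"
  by (simp add: poly_0_coeff_0 coeff_EpG)
lemma poly_OpG_0: "poly (OpG c :: 'a::comm_ring_1 poly) 0 = of_nat c"
  by (simp add: poly_0_coeff_0 coeff_OpG)

lemma coeff_pcomp_sq:
  "coeff (pcompose p [:0,0,1:]) n = (if even n then coeff p (n div 2) else (0::'a::comm_ring_1))"
proof (induction p arbitrary: n)
  case 0
  then show ?case by simp
next
  case (pCons a p)
  have e: "[:0,0,1:] * r = pCons 0 (pCons 0 r)" for r :: "'a poly"
    by (simp add: mult_pCons_left)
  show ?case
    using pCons.IH
    by (cases n; cases "n - 1") (auto simp: pcompose_pCons e coeff_pCons)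
qed

lemma coeff_lin_pow: "coeff ([:1,1:] ^ c :: 'a::comm_ring_1 poly) n = of_nat (c choose n)"
proof (cases "n \<le> c")
  case True then show ?thesis by (simp add: coeff_linear_poly_power)
next
  case False
  have "degree ([:1,1:] ^ c :: 'a poly) \<le> c"
    by (rule order.trans[OF degree_power_le]) simp
  then show ?thesis using False by (simp add: coeff_eq_0 binomial_eq_0)
qed

lemma EO_identity:
  "([:1,1:] ^ c :: 'a::comm_ring_1 poly) =
     pcompose (EpG c) [:0,0,1:] + [:0,1:] * pcompose (OpG c) [:0,0,1:]"
proof (rule poly_eqI)
  fix n
  have e: "[:0,1:] * r = pCons 0 r" for r :: "'a poly"
    by (simp add: mult_pCons_left)
  show "coeff ([:1,1:] ^ c :: 'a poly) n = coeff (pcompose (EpG c) [:0,0,1:] + [:0,1:] * pcompose (OpG c) [:0,0,1:]) n"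
    by (cases n) (auto simp: coeff_lin_pow e coeff_pCons coeff_pcomp_sq coeff_EpG coeff_OpG poly_EpG_0
        elim!: oddE evenE)
qed

lemma EO_unique:
  fixes e od e' od' :: "'a::comm_ring_1 poly"
  assumes "pcompose e [:0,0,1:] + [:0,1:] * pcompose od [:0,0,1:] =
           pcompose e' [:0,0,1:] + [:0,1:] * pcompose od' [:0,0,1:]"
  shows "e = e' \<and> od = od'"
proof -
  have ee: "[:0,1:] * r = pCons 0 r" for r :: "'a poly"
    by (simp add: mult_pCons_left)
  have c: "coeff (pcompose e [:0,0,1:] + [:0,1:] * pcompose od [:0,0,1:]) n =
           coeff (pcompose e' [:0,0,1:] + [:0,1:] * pcompose od' [:0,0,1:]) n" for n
    using assms by simp
  have "coeff e k = coeff e' k" for k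
    using c[of "2*k"] by (cases k) (auto simp: ee coeff_pCons coeff_pcomp_sq poly_0_coeff_0)
  moreover have "coeff od k = coeff od' k" for k
    using c[of "2*k+1"] by (auto simp: ee coeff_pCons coeff_pcomp_sq)
  ultimately show ?thesis by (auto intro: poly_eqI)
qed

lemma E_poly_eq: "E_poly c = EpG c"
  unfolding E_poly_def
proof (rule the_equality)
  show "\<exists>od. [:1,1:] ^ c = pcompose (EpG c) [:0,0,1:] + [:0,1:] * pcompose od [:0,0,1:]"
    using EO_identity by blast
next
  fix ev assume "\<exists>od. ([:1,1:] ^ c :: real poly) = pcompose ev [:0,0,1:] + [:0,1:] * pcompose od [:0,0,1:]"
  then obtain od where "([:1,1:] ^ c :: real poly) = pcompose ev [:0,0,1:] + [:0,1:] * pcompose od [:0,0,1:]" by blast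
  then show "ev = EpG c" using EO_unique[of ev od "EpG c" "OpG c"] EO_identity[of c] by metis
qed

lemma O_poly_eq: "O_poly c = OpG c"
  unfolding O_poly_def
proof (rule the_equality)
  show "\<exists>ev. [:1,1:] ^ c = pcompose ev [:0,0,1:] + [:0,1:] * pcompose (OpG c) [:0,0,1:]"
    using EO_identity by blast
next
  fix od assume "\<exists>ev. ([:1,1:] ^ c :: real poly) = pcompose ev [:0,0,1:] + [:0,1:] * pcompose od [:0,0,1:]"
  then obtain ev where "([:1,1:] ^ c :: real poly) = pcompose ev [:0,0,1:] + [:0,1:] * pcompose od [:0,0,1:]" by blast
  then show "od = OpG c" using EO_unique[of ev od "EpG c" "OpG c"] EO_identity[of c] by metis
qed



lemma num_identity:
  fixes u :: "'a::comm_ring_1"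
  shows "(1+u)^c = poly (EpG c) (u^2) + u * poly (OpG c) (u^2)"
proof -
  have "poly ([:1,1:] ^ c) u = poly (pcompose (EpG c) [:0,0,1:] + [:0,1:] * pcompose (OpG c) [:0,0,1:]) u"
    by (subst EO_identity) simp
  then show ?thesis by (simp add: poly_pcompose power2_eq_square algebra_simps)
qed

lemma poly_EpG_of_real: "poly (EpG c) (complex_of_real r) = complex_of_real (poly (EpG c) r)"
  by (simp add: EpG_def poly_sum poly_monom)
lemma poly_OpG_of_real: "poly (OpG c) (complex_of_real r) = complex_of_real (poly (OpG c) r)"
  by (simp add: OpG_def poly_sum poly_monom)

lemma EO_trig:
  assumes "cos x \<noteq> 0"
  shows "cos x ^ c * poly (EpG c) (- ((tan x)^2)) = cos (real c * x)"
    and "cos x ^ c * (tan x * poly (OpG c) (- ((tan x)^2))) = sin (real c * x)"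
proof -
  define t where "t = tan x"
  define u where "u = \<i> * complex_of_real t"
  have u2: "u^2 = complex_of_real (- (t^2))"
    by (simp add: u_def power_mult_distrib)
  have id: "(1+u)^c = complex_of_real (poly (EpG c) (- (t^2))) + u * complex_of_real (poly (OpG c) (- (t^2)))"
    using num_identity[of u c] unfolding u2 by (simp only: poly_EpG_of_real poly_OpG_of_real)
  have cu: "complex_of_real (cos x) * (1+u) = cis x"
    using assms by (simp add: u_def t_def tan_def complex_eq_iff)
  have "cis (real c * x) = (complex_of_real (cos x) * (1+u))^c"
    by (simp add: cu DeMoivre)
  also have "\<dots> = complex_of_real (cos x ^ c) * (1+u)^c"
    by (simp add: power_mult_distrib)
  also have "\<dots> = Complex (cos x ^ c * poly (EpG c) (- (t^2))) (cos x ^ c * (t * poly (OpG c) (- (t^2))))"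
    unfolding id by (simp add: complex_eq_iff u_def)
  finally have "cis (real c * x) = Complex (cos x ^ c * poly (EpG c) (- (t^2))) (cos x ^ c * (t * poly (OpG c) (- (t^2))))" .
  then show "cos x ^ c * poly (EpG c) (- ((tan x)^2)) = cos (real c * x)"
    and "cos x ^ c * (tan x * poly (OpG c) (- ((tan x)^2))) = sin (real c * x)"
    by (simp_all add: complex_eq_iff t_def)
qed



definition gg :: "real \<Rightarrow> real" where "gg s = - ((tan (pi * s))^2)"

lemma gg_less_iff:
  assumes "0 \<le> s" "s < 1/2" "0 \<le> r" "r < 1/2"
  shows "gg r < gg s \<longleftrightarrow> s < r"
proof -
  have a: "0 \<le> pi * s" "pi * s < pi/2" "0 \<le> pi * r" "pi * r < pi/2"
    using assms pi_gt_zero by (auto simp: field_simps)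
  have t: "0 \<le> tan (pi*s)" "0 \<le> tan (pi*r)" using a tan_pos_pi2_le by auto
  have "gg r < gg s \<longleftrightarrow> (tan (pi*s))^2 < (tan (pi*r))^2"
    by (simp add: gg_def)
  also have "\<dots> \<longleftrightarrow> tan (pi*s) < tan (pi*r)"
    using t by (auto intro: power_strict_mono dest: power_less_imp_less_base)
  also have "\<dots> \<longleftrightarrow> pi*s < pi*r" using a pi_gt_zero by (intro tan_mono_lt_eq) linarith+
  also have "\<dots> \<longleftrightarrow> s < r" by simp
  finally show ?thesis .
qed

lemma gg_le_iff:
  assumes "0 \<le> s" "s < 1/2" "0 \<le> r" "r < 1/2"
  shows "gg r \<le> gg s \<longleftrightarrow> s \<le> r"
  using gg_less_iff[OF assms(3,4,1,2)] by linarith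

lemma gg_neg: assumes "0 < s" "s < 1/2" shows "gg s < 0"
proof -
  have "0 < tan (pi*s)" using assms by (intro tan_gt_zero) (auto simp: field_simps)
  then show ?thesis by (simp add: gg_def)
qed

lemma gg_surj: assumes "t < 0" shows "\<exists>r. 0 < r \<and> r < 1/2 \<and> gg r = t"
proof -
  define r where "r = arctan (sqrt (-t)) / pi"
  have "0 < arctan (sqrt (-t))" using assms by (simp add: zero_less_arctan_iff)
  moreover have "arctan (sqrt (-t)) < pi/2" by (rule arctan_ubound)
  moreover have "pi * r = arctan (sqrt (-t))" by (simp add: r_def)
  ultimately show ?thesis using assms
    by (intro exI[of _ r]) (auto simp: r_def gg_def field_simps tan_arctan)
qed

lemma factor_roots:
  fixes p :: "real poly"
  assumes "p \<noteq> 0" "degree p \<le> length L" "distinct L" "\<forall>x\<in>set L. poly p x = 0"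
  shows "p = smult (lead_coeff p) (\<Prod>x\<leftarrow>L. [:-x,1:])"
  using assms
proof (induction L arbitrary: p)
  case Nil
  then have d: "degree p = 0" by simp
  then have "p = [:coeff p 0:]" using degree_0_id by metis
  moreover have "smult (lead_coeff p) (\<Prod>x\<leftarrow>[]. [:-x,1:]) = [:coeff p 0:]" using d by simp
  ultimately show ?case by simp
next
  case (Cons x L)
  have "poly p x = 0" using Cons.prems by simp
  then obtain q where pq: "p = [:-x,1:] * q" by (metis dvdE poly_eq_0_iff_dvd)
  have q0: "q \<noteq> 0" using pq Cons.prems by auto
  have dq: "degree p = degree q + 1" using pq q0 by (simp add: degree_mult_eq del: mult_pCons_left)
  have "\<forall>y\<in>set L. poly q y = 0"
  proof
    fix y assume y: "y \<in> set L"
    then have "y \<noteq> x" using Cons.prems by auto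
    moreover have "poly p y = 0" using Cons.prems y by simp
    ultimately show "poly q y = 0" using pq by simp
  qed
  then have "q = smult (lead_coeff q) (\<Prod>x\<leftarrow>L. [:-x,1:])"
    using Cons.IH[of q] q0 dq Cons.prems by simp
  moreover have "lead_coeff p = lead_coeff q" using pq by (simp add: lead_coeff_mult del: mult_pCons_left)
  ultimately have "p = [:-x,1:] * smult (lead_coeff p) (\<Prod>x\<leftarrow>L. [:-x,1:])"
    using pq by simp
  then show ?case by (simp only: mult_smult_right list.simps prod_list.Cons)
qed

definition rep :: "real poly \<Rightarrow> real multiset \<Rightarrow> bool" where
  "rep p M \<longleftrightarrow> p \<noteq> 0 \<and> (\<forall>s\<in>#M. 0 < s \<and> s < 1/2) \<and>
     p = smult (lead_coeff p) (prod_mset (image_mset (\<lambda>s. [:- gg s, 1:]) M))"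

lemma rep_mult: assumes "rep p M" "rep q N" shows "rep (p*q) (M+N)"
proof -
  have "p * q = smult (lead_coeff p) (prod_mset (image_mset (\<lambda>s. [:- gg s, 1:]) M)) *
                smult (lead_coeff q) (prod_mset (image_mset (\<lambda>s. [:- gg s, 1:]) N))"
    using assms unfolding rep_def by (intro arg_cong2[where f=times]) blast+
  also have "\<dots> = smult (lead_coeff (p*q)) (prod_mset (image_mset (\<lambda>s. [:- gg s, 1:]) (M+N)))"
    by (simp add: lead_coeff_mult mult_ac del: mult_pCons_left mult_pCons_right)
  finally show ?thesis using assms unfolding rep_def by auto
qed

lemma map_poly_of_real_mult:
  "map_poly complex_of_real (p*q) = map_poly complex_of_real p * map_poly complex_of_real q"
  by (rule poly_eqI) (simp add: coeff_map_poly coeff_mult)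

lemma poly_map_prod:
  "poly (map_poly complex_of_real (prod_mset (image_mset (\<lambda>s. [:- gg s, 1:]) M))) z =
     (\<Prod>s\<in>#M. z - complex_of_real (gg s))"
  by (induction M) (simp_all add: map_poly_of_real_mult map_poly_pCons del: mult_pCons_left mult_pCons_right)

lemma rep_real_rooted: assumes "rep p M" shows "real_rooted p"
  unfolding real_rooted_def
proof (intro allI impI)
  fix z assume z: "poly (map_poly complex_of_real p) z = 0"
  have "map_poly complex_of_real p = smult (complex_of_real (lead_coeff p))
          (map_poly complex_of_real (prod_mset (image_mset (\<lambda>s. [:- gg s, 1:]) M)))"
  proof -
    have "p = smult (lead_coeff p) (prod_mset (image_mset (\<lambda>s. [:- gg s, 1:]) M))"
      using assms unfolding rep_def by blast
    then have "map_poly complex_of_real p = map_poly complex_of_real (smult (lead_coeff p) (prod_mset (image_mset (\<lambda>s. [:- gg s, 1:]) M)))"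
      by (rule arg_cong)
    then show ?thesis by (simp add: map_poly_smult)
  qed
  then have "complex_of_real (lead_coeff p) * (\<Prod>s\<in>#M. z - complex_of_real (gg s)) = 0"
    using z by (simp add: poly_map_prod)
  moreover have "lead_coeff p \<noteq> 0" using assms by (simp add: rep_def)
  ultimately have "(\<Prod>s\<in>#M. z - complex_of_real (gg s)) = 0" by simp
  then obtain s where "z = complex_of_real (gg s)"
    by (auto simp: prod_mset_zero_iff)
  then show "z \<in> \<real>" by simp
qed

lemma degree_prod_lin: "degree (prod_mset (image_mset (\<lambda>s. [:- gg s, 1:]) M)) = size M"
proof (induction M)
  case empty then show ?case by simp
next
  case (add x M)
  have "prod_mset (image_mset (\<lambda>s. [:- gg s, 1:]) M) \<noteq> 0" by (auto simp: prod_mset_zero_iff)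
  then show ?case using add by (simp add: degree_mult_eq del: mult_pCons_left mult_pCons_right)
qed

lemma rep_degree: assumes "rep p M" shows "degree p = size M"
proof -
  have hp: "p = smult (lead_coeff p) (prod_mset (image_mset (\<lambda>s. [:- gg s, 1:]) M))"
    and "p \<noteq> 0" using assms unfolding rep_def by blast+
  have "degree p = degree (smult (lead_coeff p) (prod_mset (image_mset (\<lambda>s. [:- gg s, 1:]) M)))"
    using hp by (rule arg_cong)
  then show ?thesis using \<open>p \<noteq> 0\<close> by (simp add: degree_prod_lin)
qed



definition ME :: "nat \<Rightarrow> real multiset" where
  "ME c = image_mset (\<lambda>j. (2*real j+1)/(2*real c)) (mset [0..<c div 2])"
definition MO :: "nat \<Rightarrow> real multiset" where
  "MO c = image_mset (\<lambda>k. real k / real c) (mset [1..<(c-1) div 2 + 1])"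

lemma inj_gg_on:
  assumes "\<forall>i\<in>A. 0 < f i \<and> f i < 1/2" "inj_on f A"
  shows "inj_on (\<lambda>i. gg (f i)) A"
proof (rule inj_onI)
  fix i j assume ij: "i \<in> A" "j \<in> A" "gg (f i) = gg (f j)"
  have "f i = f j"
  proof (rule ccontr)
    assume "f i \<noteq> f j"
    then have "f i < f j \<or> f j < f i" by linarith
    then show False using ij assms(1) gg_less_iff[of "f i" "f j"] gg_less_iff[of "f j" "f i"] by auto
  qed
  then show "i = j" using assms(2) ij by (auto dest: inj_onD)
qed

lemma rep_E: "rep (EpG c) (ME c)"
proof -
  define f where "f = (\<lambda>j::nat. (2*real j+1)/(2*real c))"
  define L where "L = map (\<lambda>j. gg (f j)) [0..<c div 2]"
  have rng: "0 < f j \<and> f j < 1/2" if "j < c div 2" for j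
  proof -
    have "2*j+2 \<le> c" using that by linarith
    then have "2 * real j + 2 \<le> real c" by linarith
    then show ?thesis by (auto simp: f_def field_simps)
  qed
  have nz: "EpG c \<noteq> (0::real poly)" using poly_EpG_0[of c, where 'a=real] by auto
  have deg: "degree (EpG c :: real poly) \<le> c div 2"
    by (rule degree_le) (auto simp: coeff_EpG binomial_eq_0)
  have injf: "inj_on f {0..<c div 2}"
    by (rule inj_onI) (auto simp: f_def field_simps)
  have dist: "distinct L" unfolding L_def distinct_map
    using inj_gg_on[of "{0..<c div 2}" f] rng injf by auto
  have roots: "\<forall>x\<in>set L. poly (EpG c) x = 0"
  proof
    fix x assume "x \<in> set L"
    then obtain j where j: "j < c div 2" "x = gg (f j)" by (auto simp: L_def)
    define \<phi> where "\<phi> = pi * f j"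
    have "0 < \<phi>" "\<phi> < pi/2" using rng[OF j(1)] pi_gt_zero by (auto simp: \<phi>_def)
    then have cpos: "0 < cos \<phi>" by (intro cos_gt_zero_pi) auto
    have c0: "c > 0" using j by auto
    have "real c * \<phi> = real (2*j+1) * (pi/2)" using c0 by (simp add: \<phi>_def f_def field_simps)
    then have "cos (real c * \<phi>) = 0"
      unfolding cos_zero_iff by (intro disjI1 exI[of _ "2*j+1"]) simp
    then have "cos \<phi> ^ c * poly (EpG c) (- ((tan \<phi>)^2)) = 0"
      using EO_trig(1)[of \<phi> c] cpos by simp
    then show "poly (EpG c) x = 0" using cpos by (simp add: j gg_def \<phi>_def)
  qed
  have fac: "EpG c = smult (lead_coeff (EpG c)) (\<Prod>x\<leftarrow>L. [:-x,1:])"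
    by (rule factor_roots[OF nz _ dist roots]) (simp add: L_def deg)
  have "(\<Prod>x\<leftarrow>L. [:-x,1:]) = prod_mset (image_mset (\<lambda>s. [:- gg s, 1:]) (ME c))"
    by (simp add: L_def ME_def f_def prod_mset_prod_list[symmetric] multiset.map_comp o_def)
  then show ?thesis using fac nz rng unfolding rep_def ME_def f_def by auto
qed

lemma rep_O: assumes "c \<ge> 1" shows "rep (OpG c) (MO c)"
proof -
  define f where "f = (\<lambda>k::nat. real k / real c)"
  define L where "L = map (\<lambda>j. gg (f j)) [1..<(c-1) div 2 + 1]"
  have rng: "0 < f j \<and> f j < 1/2" if "1 \<le> j" "j < (c-1) div 2 + 1" for j
  proof -
    have "2*j+1 \<le> c" using that by linarith
    then have "2 * real j + 1 \<le> real c" by linarith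
    then show ?thesis using that by (auto simp: f_def field_simps)
  qed
  have nz: "OpG c \<noteq> (0::real poly)" using poly_OpG_0[of c, where 'a=real] assms by auto
  have deg: "degree (OpG c :: real poly) \<le> (c-1) div 2"
    by (rule degree_le) (auto simp: coeff_OpG binomial_eq_0)
  have injf: "inj_on f {1..<(c-1) div 2 + 1}"
    using assms by (intro inj_onI) (auto simp: f_def field_simps)
  have i: "inj_on (\<lambda>j. gg (f j)) {1..<(c-1) div 2 + 1}"
    using inj_gg_on[of "{1..<(c-1) div 2 + 1}" f] rng injf by auto
  have dist: "distinct L" unfolding L_def distinct_map set_upt
    by (intro conjI) (simp, rule i)
  have roots: "\<forall>x\<in>set L. poly (OpG c) x = 0"
  proof
    fix x assume "x \<in> set L"
    then obtain j where j: "1 \<le> j" "j < (c-1) div 2 + 1" "x = gg (f j)" by (auto simp: L_def)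
    define \<phi> where "\<phi> = pi * f j"
    have "0 < \<phi>" "\<phi> < pi/2" using rng[OF j(1,2)] pi_gt_zero by (auto simp: \<phi>_def)
    then have cpos: "0 < cos \<phi>" and tpos: "0 < tan \<phi>" by (auto intro: cos_gt_zero_pi tan_gt_zero)
    have "real c * \<phi> = real j * pi" using assms by (simp add: \<phi>_def f_def field_simps)
    then have "sin (real c * \<phi>) = 0" by simp
    then have "cos \<phi> ^ c * (tan \<phi> * poly (OpG c) (- ((tan \<phi>)^2))) = 0"
      using EO_trig(2)[of \<phi> c] cpos by simp
    then show "poly (OpG c) x = 0" using cpos tpos by (simp add: j gg_def \<phi>_def)
  qed
  have fac: "OpG c = smult (lead_coeff (OpG c)) (\<Prod>x\<leftarrow>L. [:-x,1:])"
    by (rule factor_roots[OF nz _ dist roots]) (use deg in \<open>simp add: L_def\<close>)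
  have "(\<Prod>x\<leftarrow>L. [:-x,1:]) = prod_mset (image_mset (\<lambda>s. [:- gg s, 1:]) (MO c))"
    by (simp add: L_def MO_def f_def prod_mset_prod_list[symmetric] multiset.map_comp o_def)
  then show ?thesis using fac nz rng unfolding rep_def MO_def f_def by auto
qed



lemma cnt_ge:
  assumes "sorted xs" "i < length xs" "\<And>x y. x \<le> y \<Longrightarrow> P x \<Longrightarrow> P y" "P (xs!i)"
  shows "length xs - i \<le> length (filter P xs)"
proof -
  have "{i..<length xs} \<subseteq> {j. j < length xs \<and> P (xs!j)}"
  proof
    fix j assume "j \<in> {i..<length xs}"
    then have "i \<le> j" "j < length xs" by auto
    then have "xs!i \<le> xs!j" using assms(1) by (simp add: sorted_nth_mono)
    then show "j \<in> {j. j < length xs \<and> P (xs!j)}" using assms(3,4) \<open>j < length xs\<close> by blast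
  qed
  then have "card {i..<length xs} \<le> card {j. j < length xs \<and> P (xs!j)}"
    by (intro card_mono) auto
  then show ?thesis by (simp add: length_filter_conv_card)
qed

lemma cnt_le:
  assumes "sorted xs" "i < length xs" "\<And>x y. x \<le> y \<Longrightarrow> P x \<Longrightarrow> P y" "\<not> P (xs!i)"
  shows "length (filter P xs) \<le> length xs - i - 1"
proof -
  have "{j. j < length xs \<and> P (xs!j)} \<subseteq> {i+1..<length xs}"
  proof
    fix j assume j: "j \<in> {j. j < length xs \<and> P (xs!j)}"
    show "j \<in> {i+1..<length xs}"
    proof (rule ccontr)
      assume "j \<notin> {i+1..<length xs}"
      then have "j \<le> i" using j by auto
      then have "xs!j \<le> xs!i" using assms(1,2) by (simp add: sorted_nth_mono)
      then show False using assms(3,4) j by blast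
    qed
  qed
  then have "card {j. j < length xs \<and> P (xs!j)} \<le> card {i+1..<length xs}"
    by (intro card_mono) auto
  then show ?thesis by (simp add: length_filter_conv_card)
qed

lemma below_all: "\<exists>t::real. \<forall>x\<in>set zs. t < x"
proof -
  have "\<forall>x\<in>set zs. Min (insert 0 (set zs)) - 1 < x"
    by (auto simp: Min_le_iff) (smt (verit, best) Min_le finite_insert finite_set insertI2)
  then show ?thesis by blast
qed

lemma interlace:
  fixes xs ys :: "real list"
  assumes sx: "sorted xs" and sy: "sorted ys"
    and H1: "\<And>t. length (filter (\<lambda>x. t < x) xs) \<le> length (filter (\<lambda>x. t < x) ys)"
    and H2: "\<And>t. length (filter (\<lambda>x. t \<le> x) ys) \<le> length (filter (\<lambda>x. t \<le> x) xs) + 1"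
  shows "(length ys = length xs + 1 \<and> (\<forall>i<length xs. ys!i \<le> xs!i \<and> xs!i \<le> ys!(i+1))) \<or>
         (length xs = length ys \<and> (\<forall>i<length xs. xs!i \<le> ys!i \<and> (i+1 < length xs \<longrightarrow> ys!i \<le> xs!(i+1))))"
proof -
  obtain t0 where t0: "\<forall>x\<in>set (xs@ys). t0 < x" using below_all by blast
  have "filter (\<lambda>x. t0 < x) xs = xs" "filter (\<lambda>x. t0 < x) ys = ys"
    using t0 by (auto simp: filter_id_conv)
  moreover have "filter (\<lambda>x. t0 \<le> x) xs = xs" "filter (\<lambda>x. t0 \<le> x) ys = ys"
    using t0 by (auto simp: filter_id_conv less_imp_le)
  ultimately have len: "length xs \<le> length ys" "length ys \<le> length xs + 1"
    using H1[of t0] H2[of t0] by auto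
  have up1: "\<And>x y. x \<le> y \<Longrightarrow> t < x \<Longrightarrow> t < y" for t :: real by auto
  have up2: "\<And>x y. x \<le> y \<Longrightarrow> t \<le> x \<Longrightarrow> t \<le> y" for t :: real by auto
  show ?thesis
  proof (cases "length ys = length xs + 1")
    case True
    have "ys!i \<le> xs!i \<and> xs!i \<le> ys!(i+1)" if i: "i < length xs" for i
    proof
      show "ys!i \<le> xs!i"
      proof (rule ccontr)
        assume "\<not> ys!i \<le> xs!i"
        then have a: "\<not> ys!i \<le> xs!i" .
        have "length ys - i \<le> length (filter (\<lambda>x. ys!i \<le> x) ys)"
          using True i by (intro cnt_ge[OF sy]) auto
        moreover have "length (filter (\<lambda>x. ys!i \<le> x) xs) \<le> length xs - i - 1"
          using a i by (intro cnt_le[OF sx]) auto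
        ultimately show False using H2[of "ys!i"] True i by linarith
      qed
      show "xs!i \<le> ys!(i+1)"
      proof (rule ccontr)
        assume a: "\<not> xs!i \<le> ys!(i+1)"
        have "length xs - i \<le> length (filter (\<lambda>x. ys!(i+1) < x) xs)"
          using a i by (intro cnt_ge[OF sx]) auto
        moreover have "length (filter (\<lambda>x. ys!(i+1) < x) ys) \<le> length ys - (i+1) - 1"
          using True i by (intro cnt_le[OF sy]) auto
        ultimately show False using H1[of "ys!(i+1)"] True i by linarith
      qed
    qed
    then show ?thesis using True by blast
  next
    case False
    then have eq: "length xs = length ys" using len by linarith
    have "xs!i \<le> ys!i \<and> (i+1 < length xs \<longrightarrow> ys!i \<le> xs!(i+1))" if i: "i < length xs" for i
    proof
      show "xs!i \<le> ys!i"
      proof (rule ccontr)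
        assume a: "\<not> xs!i \<le> ys!i"
        have "length xs - i \<le> length (filter (\<lambda>x. ys!i < x) xs)"
          using a i by (intro cnt_ge[OF sx]) auto
        moreover have "length (filter (\<lambda>x. ys!i < x) ys) \<le> length ys - i - 1"
          using eq i by (intro cnt_le[OF sy]) auto
        ultimately show False using H1[of "ys!i"] eq i by linarith
      qed
      show "i+1 < length xs \<longrightarrow> ys!i \<le> xs!(i+1)"
      proof (intro impI, rule ccontr)
        assume i1: "i+1 < length xs" and a: "\<not> ys!i \<le> xs!(i+1)"
        have "length ys - i \<le> length (filter (\<lambda>x. ys!i \<le> x) ys)"
          using eq i by (intro cnt_ge[OF sy]) auto
        moreover have "length (filter (\<lambda>x. ys!i \<le> x) xs) \<le> length xs - (i+1) - 1"
          using a i1 by (intro cnt_le[OF sx]) auto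
        ultimately show False using H2[of "ys!i"] eq i1 by linarith
      qed
    qed
    then show ?thesis using eq by blast
  qed
qed



lemma cnt_transfer:
  assumes M: "\<forall>s\<in>#M. 0 < s \<and> s < 1/2" and t: "t < 0"
    and r: "0 < r" "r < 1/2" "gg r = t"
  shows "filter_mset (\<lambda>s. t < gg s) M = filter_mset (\<lambda>s. s < r) M"
    and "filter_mset (\<lambda>s. t \<le> gg s) M = filter_mset (\<lambda>s. s \<le> r) M"
proof -
  show "filter_mset (\<lambda>s. t < gg s) M = filter_mset (\<lambda>s. s < r) M"
    using M r by (intro filter_mset_cong refl) (auto simp: gg_less_iff)
  show "filter_mset (\<lambda>s. t \<le> gg s) M = filter_mset (\<lambda>s. s \<le> r) M"
    using M r by (intro filter_mset_cong refl) (auto simp: gg_le_iff)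
qed

lemma cnt_nonneg:
  assumes M: "\<forall>s\<in>#M. 0 < s \<and> s < 1/2" and t: "0 \<le> t"
  shows "filter_mset (\<lambda>s. t < gg s) M = {#}" and "filter_mset (\<lambda>s. t \<le> gg s) M = {#}"
proof -
  have "gg s < 0" if "s \<in># M" for s using M that gg_neg by auto
  then show "filter_mset (\<lambda>s. t < gg s) M = {#}" "filter_mset (\<lambda>s. t \<le> gg s) M = {#}"
    using t by (auto simp: filter_mset_eq_conv) (smt (verit))+
qed

lemma len_filter_sorted_list:
  "length (filter P (sorted_list_of_multiset (image_mset gg M))) = size (filter_mset (\<lambda>s. P (gg s)) M)"
proof -
  have "length (filter P (sorted_list_of_multiset (image_mset gg M))) =
        size (mset (filter P (sorted_list_of_multiset (image_mset gg M))))" by (rule size_mset[symmetric])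
  also have "\<dots> = size (filter_mset P (image_mset gg M))"
    by (subst mset_filter, subst mset_sorted_list_of_multiset, rule refl)
  also have "\<dots> = size (filter_mset (\<lambda>s. P (gg s)) M)" by (simp add: filter_mset_image_mset)
  finally show ?thesis .
qed

lemma zero_list_rep:
  assumes "rep p M"
  shows "zero_list p (sorted_list_of_multiset (image_mset gg M))"
proof -
  have "(\<Prod>x\<leftarrow>sorted_list_of_multiset (image_mset gg M). [:-x,1:]) =
        prod_mset (mset (map (\<lambda>x. [:-x,1:]) (sorted_list_of_multiset (image_mset gg M))))"
    by (simp only: prod_mset_prod_list)
  also have "\<dots> = prod_mset (image_mset (\<lambda>s. [:- gg s, 1:]) M)"
    by (simp add: multiset.map_comp o_def)
  finally show ?thesis using assms unfolding zero_list_def rep_def by simp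
qed

lemma length_sl: "length (sorted_list_of_multiset N) = size N"
  by (metis mset_sorted_list_of_multiset size_mset)

definition cond :: "real multiset \<Rightarrow> real multiset \<Rightarrow> bool" where
  "cond MA MB \<longleftrightarrow> (\<forall>r. 0 < r \<longrightarrow> r < 1/2 \<longrightarrow>
     size (filter_mset (\<lambda>s. s < r) MA) \<le> size (filter_mset (\<lambda>s. s < r) MB) \<and>
     size (filter_mset (\<lambda>s. s \<le> r) MB) \<le> size (filter_mset (\<lambda>s. s \<le> r) MA) + 1)"

lemma prec_from_rep:
  assumes A: "rep A MA" and B: "rep B MB" and C: "cond MA MB"
  shows "A \<prec>\<^sub>p B"
proof -
  define xs where "xs = sorted_list_of_multiset (image_mset gg MA)"
  define ys where "ys = sorted_list_of_multiset (image_mset gg MB)"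
  have MA: "\<forall>s\<in>#MA. 0 < s \<and> s < 1/2" and MB: "\<forall>s\<in>#MB. 0 < s \<and> s < 1/2"
    using A B by (auto simp: rep_def)
  have H1: "length (filter (\<lambda>x. t < x) xs) \<le> length (filter (\<lambda>x. t < x) ys)" for t
  proof (cases "t < 0")
    case True
    then obtain r where r: "0 < r" "r < 1/2" "gg r = t" using gg_surj by blast
    show ?thesis unfolding xs_def ys_def len_filter_sorted_list
      cnt_transfer(1)[OF MA True r] cnt_transfer(1)[OF MB True r]
      using C r unfolding cond_def by blast
  next
    case False
    then have t0: "0 \<le> t" by simp
    show ?thesis unfolding xs_def ys_def len_filter_sorted_list
      cnt_nonneg(1)[OF MA t0] cnt_nonneg(1)[OF MB t0] by simp
  qed
  have H2: "length (filter (\<lambda>x. t \<le> x) ys) \<le> length (filter (\<lambda>x. t \<le> x) xs) + 1" for t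
  proof (cases "t < 0")
    case True
    then obtain r where r: "0 < r" "r < 1/2" "gg r = t" using gg_surj by blast
    show ?thesis unfolding xs_def ys_def len_filter_sorted_list
      cnt_transfer(2)[OF MA True r] cnt_transfer(2)[OF MB True r]
      using C r unfolding cond_def by blast
  next
    case False
    then have t0: "0 \<le> t" by simp
    show ?thesis unfolding xs_def ys_def len_filter_sorted_list
      cnt_nonneg(2)[OF MA t0] cnt_nonneg(2)[OF MB t0] by simp
  qed
  have I: "(length ys = length xs + 1 \<and> (\<forall>i<length xs. ys!i \<le> xs!i \<and> xs!i \<le> ys!(i+1))) \<or>
         (length xs = length ys \<and> (\<forall>i<length xs. xs!i \<le> ys!i \<and> (i+1 < length xs \<longrightarrow> ys!i \<le> xs!(i+1))))"
    by (rule interlace[OF _ _ H1 H2]) (simp_all add: xs_def ys_def)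
  have dA: "degree A = length xs" and dB: "degree B = length ys"
    using rep_degree[OF A] rep_degree[OF B] by (simp_all add: xs_def ys_def length_sl)
  have zA: "zero_list A xs" and zB: "zero_list B ys"
    using zero_list_rep[OF A] zero_list_rep[OF B] by (simp_all add: xs_def ys_def)
  have "A \<noteq> 0" "B \<noteq> 0" using A B by (auto simp: rep_def)
  moreover have "real_rooted A" "real_rooted B" using rep_real_rooted A B by auto
  ultimately show ?thesis unfolding prec_def using I dA dB zA zB by metis
qed



lemma card_lt0: "w \<le> real N \<Longrightarrow> card {j\<in>{0..<N}. real j < w} = nat \<lceil>w\<rceil>"
proof -
  assume w: "w \<le> real N"
  have "{j\<in>{0..<N}. real j < w} = {0..<nat \<lceil>w\<rceil>}"
    using w by (auto simp: zless_nat_eq_int_zless less_ceiling_iff)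
  then show ?thesis by simp
qed

lemma card_le0: "w < real N \<Longrightarrow> card {j\<in>{0..<N}. real j \<le> w} = nat (\<lfloor>w\<rfloor> + 1)"
proof -
  assume w: "w < real N"
  have "{j\<in>{0..<N}. real j \<le> w} = {0..<nat (\<lfloor>w\<rfloor> + 1)}"
    using w by (auto simp: zless_nat_eq_int_zless le_floor_iff)
  then show ?thesis by simp
qed

lemma card_lt1: "w \<le> real N + 1 \<Longrightarrow> card {k\<in>{1..<N+1}. real k < w} = nat (\<lceil>w\<rceil> - 1)"
proof -
  assume w: "w \<le> real N + 1"
  have "{k\<in>{1..<N+1}. real k < w} = {1..<nat \<lceil>w\<rceil>}"
    using w by (auto simp: zless_nat_eq_int_zless less_ceiling_iff)
  then show ?thesis by simp
qed

lemma card_le1: "w < real N + 1 \<Longrightarrow> card {k\<in>{1..<N+1}. real k \<le> w} = nat \<lfloor>w\<rfloor>"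
proof -
  assume w: "w < real N + 1"
  have i: "x < nat (\<lfloor>w\<rfloor> + 1) \<longleftrightarrow> real x \<le> w" for x :: nat
    by (simp add: zless_nat_eq_int_zless le_floor_iff[symmetric] del: of_int_of_nat_eq) linarith
  have "{k\<in>{1..<N+1}. real k \<le> w} = {1..<nat (\<lfloor>w\<rfloor> + 1)}"
    using w by (auto simp: i)
  then show ?thesis by simp
qed

lemma cntE_lt:
  assumes "0 < r" "r < 1/2"
  shows "size (filter_mset (\<lambda>s. s < r) (ME c)) = nat \<lceil>real c * r - 1/2\<rceil>"
proof (cases "c = 0")
  case True then show ?thesis by (simp add: ME_def)
next
  case False
  have e: "(2 * real j + 1) / (2 * real c) < r \<longleftrightarrow> real j < real c * r - 1/2" for j
    using False by (simp add: field_simps)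
  have "2 * (c div 2) + 1 \<ge> c" by linarith
  then have h2: "real c \<le> 2 * real (c div 2) + 1" by linarith
  have h1: "real c * r < real c / 2" using assms False by simp
  have "real c * r - 1/2 \<le> real (c div 2)" using h1 h2 by linarith
  moreover have "size (filter_mset (\<lambda>s. s < r) (ME c)) = card {j\<in>{0..<c div 2}. real j < real c * r - 1/2}"
    by (simp add: ME_def filter_mset_image_mset e)
  ultimately show ?thesis using card_lt0 by simp
qed

lemma cntE_le:
  assumes "0 < r" "r < 1/2"
  shows "size (filter_mset (\<lambda>s. s \<le> r) (ME c)) = nat (\<lfloor>real c * r - 1/2\<rfloor> + 1)"
proof (cases "c = 0")
  case True then show ?thesis by (simp add: ME_def)
next
  case False
  have e: "(2 * real j + 1) / (2 * real c) \<le> r \<longleftrightarrow> real j \<le> real c * r - 1/2" for j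
    using False by (simp add: field_simps)
  have "2 * (c div 2) + 1 \<ge> c" by linarith
  then have h2: "real c \<le> 2 * real (c div 2) + 1" by linarith
  have h1: "real c * r < real c / 2" using assms False by simp
  have "real c * r - 1/2 < real (c div 2)" using h1 h2 by linarith
  moreover have "size (filter_mset (\<lambda>s. s \<le> r) (ME c)) = card {j\<in>{0..<c div 2}. real j \<le> real c * r - 1/2}"
    by (simp add: ME_def filter_mset_image_mset e)
  ultimately show ?thesis using card_le0 by simp
qed

lemma cntO_lt:
  assumes "0 < r" "r < 1/2" "c \<ge> 1"
  shows "size (filter_mset (\<lambda>s. s < r) (MO c)) = nat (\<lceil>real c * r\<rceil> - 1)"
proof -
  have e: "real k / real c < r \<longleftrightarrow> real k < real c * r" for k
    using assms by (simp add: field_simps)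
  have "2 * ((c-1) div 2 + 1) \<ge> c" using assms(3) by presburger
  then have h2: "real c \<le> 2 * real ((c-1) div 2) + 2" by linarith
  have h1: "real c * r < real c / 2" using assms by simp
  have "real c * r \<le> real ((c-1) div 2) + 1" using h1 h2 by linarith
  moreover have "size (filter_mset (\<lambda>s. s < r) (MO c)) = card {k\<in>{1..<(c-1) div 2 + 1}. real k < real c * r}"
    by (simp only: MO_def filter_mset_image_mset size_image_mset mset_upt
        filter_mset_mset_set[OF finite_atLeastLessThan] size_mset_set e)
  ultimately show ?thesis using card_lt1 by simp
qed

lemma cntO_le:
  assumes "0 < r" "r < 1/2" "c \<ge> 1"
  shows "size (filter_mset (\<lambda>s. s \<le> r) (MO c)) = nat \<lfloor>real c * r\<rfloor>"
proof -
  have e: "real k / real c \<le> r \<longleftrightarrow> real k \<le> real c * r" for k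
    using assms by (simp add: field_simps)
  have "2 * ((c-1) div 2 + 1) \<ge> c" using assms(3) by presburger
  then have h2: "real c \<le> 2 * real ((c-1) div 2) + 2" by linarith
  have h1: "real c * r < real c / 2" using assms by simp
  have "real c * r < real ((c-1) div 2) + 1" using h1 h2 by linarith
  moreover have "size (filter_mset (\<lambda>s. s \<le> r) (MO c)) = card {k\<in>{1..<(c-1) div 2 + 1}. real k \<le> real c * r}"
    by (simp only: MO_def filter_mset_image_mset size_image_mset mset_upt
        filter_mset_mset_set[OF finite_atLeastLessThan] size_mset_set e)
  ultimately show ?thesis using card_le1 by simp
qed

lemma ceil_sum_ge: "\<lceil>u\<rceil> + \<lceil>v\<rceil> \<le> \<lceil>u + v\<rceil> + (1::int)" for u v :: real
proof -
  have "real_of_int (\<lceil>u\<rceil> + \<lceil>v\<rceil>) < real_of_int (\<lceil>u + v\<rceil> + 2)"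
    using ceiling_correct[of u] ceiling_correct[of v] ceiling_correct[of "u+v"] by simp linarith
  then show ?thesis by linarith
qed

lemma floor_sum_le: "\<lfloor>u + v\<rfloor> \<le> \<lfloor>u\<rfloor> + \<lfloor>v\<rfloor> + (1::int)" for u v :: real
proof -
  have "real_of_int \<lfloor>u + v\<rfloor> < real_of_int (\<lfloor>u\<rfloor> + \<lfloor>v\<rfloor> + 2)"
    using floor_correct[of u] floor_correct[of v] floor_correct[of "u+v"] by simp linarith
  then show ?thesis by linarith
qed



lemma OpG_0: "OpG 0 = (0::real poly)" by (simp add: OpG_def)
lemma EpG_0: "EpG 0 = (1::real poly)" by (simp add: EpG_def)

lemma prec_0_left: "B = 0 \<or> real_rooted B \<Longrightarrow> 0 \<prec>\<^sub>p B"
  by (auto simp: prec_def)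

lemma size_filter_plus: "size (filter_mset P (M + N)) = size (filter_mset P M) + size (filter_mset P N)"
  by simp

lemma claim2: "EpG a * OpG b \<prec>\<^sub>p (EpG (a+b) :: real poly)"
proof (cases "b = 0")
  case True
  then show ?thesis using rep_real_rooted[OF rep_E] by (simp add: OpG_0 prec_0_left)
next
  case False
  have "cond (ME a + MO b) (ME (a+b))"
    unfolding cond_def
  proof (intro allI impI)
    fix r :: real assume r: "0 < r" "r < 1/2"
    define x where "x = real a * r"
    define y where "y = real b * r"
    have x0: "0 \<le> x" using r by (simp add: x_def)
    have y0: "0 < y" using r False by (simp add: y_def)
    have xy: "real (a+b) * r = x + y" by (simp add: x_def y_def algebra_simps)
    have c1: "\<lceil>x - 1/2\<rceil> + \<lceil>y\<rceil> \<le> \<lceil>x + y - 1/2\<rceil> + 1"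
      using ceil_sum_ge[of "x - 1/2" y] by (simp add: algebra_simps)
    have c2: "\<lfloor>x + y - 1/2\<rfloor> \<le> \<lfloor>x - 1/2\<rfloor> + \<lfloor>y\<rfloor> + 1"
      using floor_sum_le[of "x - 1/2" y] by (simp add: algebra_simps)
    have p1: "0 \<le> \<lceil>x - 1/2\<rceil>" using x0 by (simp add: le_ceiling_iff)
    have p2: "1 \<le> \<lceil>y\<rceil>" using y0 by (simp add: le_ceiling_iff)
    have "-1 \<le> \<lfloor>x - 1/2\<rfloor>" using x0 by (simp add: le_floor_iff)
    then have p3: "0 \<le> \<lfloor>x - 1/2\<rfloor> + 1" by linarith
    have p4: "0 \<le> \<lfloor>y\<rfloor>" using y0 by simp
    have b1: "1 \<le> b" using False by simp
    have e1: "size (filter_mset (\<lambda>s. s < r) (ME a + MO b)) = nat \<lceil>x - 1/2\<rceil> + nat (\<lceil>y\<rceil> - 1)"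
      unfolding size_filter_plus cntE_lt[OF r] cntO_lt[OF r b1] x_def y_def ..
    have e2: "size (filter_mset (\<lambda>s. s < r) (ME (a+b))) = nat \<lceil>x + y - 1/2\<rceil>"
      unfolding cntE_lt[OF r] xy ..
    have e3: "size (filter_mset (\<lambda>s. s \<le> r) (ME a + MO b)) = nat (\<lfloor>x - 1/2\<rfloor> + 1) + nat \<lfloor>y\<rfloor>"
      unfolding size_filter_plus cntE_le[OF r] cntO_le[OF r b1] x_def y_def ..
    have e4: "size (filter_mset (\<lambda>s. s \<le> r) (ME (a+b))) = nat (\<lfloor>x + y - 1/2\<rfloor> + 1)"
      unfolding cntE_le[OF r] xy ..
    show "size (filter_mset (\<lambda>s. s < r) (ME a + MO b)) \<le> size (filter_mset (\<lambda>s. s < r) (ME (a+b))) \<and>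
          size (filter_mset (\<lambda>s. s \<le> r) (ME (a+b))) \<le> size (filter_mset (\<lambda>s. s \<le> r) (ME a + MO b)) + 1"
      unfolding e1 e2 e3 e4 using c1 c2 p1 p2 p3 p4 by arith
  qed
  moreover have b1: "1 \<le> b" using False by simp
  ultimately show ?thesis by (intro prec_from_rep[OF rep_mult[OF rep_E rep_O[OF b1]] rep_E])
qed

lemma claim4a: "OpG a * OpG b \<prec>\<^sub>p (OpG (a+b) :: real poly)"
proof (cases "a = 0 \<or> b = 0")
  case True
  have "OpG (a+b) = (0::real poly) \<or> real_rooted (OpG (a+b))"
  proof (cases "a + b = 0")
    case True then show ?thesis by (simp add: OpG_0)
  next
    case False then have "1 \<le> a + b" by linarith
    then show ?thesis using rep_real_rooted[OF rep_O[of "a+b"]] by blast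
  qed
  then show ?thesis using True by (auto simp: OpG_0 prec_0_left)
next
  case False
  have a1: "1 \<le> a" and b1: "1 \<le> b" and ab1: "1 \<le> a + b" using False by auto
  have "cond (MO a + MO b) (MO (a+b))"
    unfolding cond_def
  proof (intro allI impI)
    fix r :: real assume r: "0 < r" "r < 1/2"
    define x where "x = real a * r"
    define y where "y = real b * r"
    have x0: "0 < x" using r a1 by (simp add: x_def)
    have y0: "0 < y" using r b1 by (simp add: y_def)
    have xy: "real (a+b) * r = x + y" by (simp add: x_def y_def algebra_simps)
    have c1: "\<lceil>x\<rceil> + \<lceil>y\<rceil> \<le> \<lceil>x + y\<rceil> + 1" by (rule ceil_sum_ge)
    have c2: "\<lfloor>x + y\<rfloor> \<le> \<lfloor>x\<rfloor> + \<lfloor>y\<rfloor> + 1" by (rule floor_sum_le)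
    have p1: "1 \<le> \<lceil>x\<rceil>" using x0 by (simp add: le_ceiling_iff)
    have p2: "1 \<le> \<lceil>y\<rceil>" using y0 by (simp add: le_ceiling_iff)
    have p3: "0 \<le> \<lfloor>x\<rfloor>" using x0 by simp
    have p4: "0 \<le> \<lfloor>y\<rfloor>" using y0 by simp
    have e1: "size (filter_mset (\<lambda>s. s < r) (MO a + MO b)) = nat (\<lceil>x\<rceil> - 1) + nat (\<lceil>y\<rceil> - 1)"
      unfolding size_filter_plus cntO_lt[OF r a1] cntO_lt[OF r b1] x_def y_def ..
    have e2: "size (filter_mset (\<lambda>s. s < r) (MO (a+b))) = nat (\<lceil>x + y\<rceil> - 1)"
      unfolding cntO_lt[OF r ab1] xy ..
    have e3: "size (filter_mset (\<lambda>s. s \<le> r) (MO a + MO b)) = nat \<lfloor>x\<rfloor> + nat \<lfloor>y\<rfloor>"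
      unfolding size_filter_plus cntO_le[OF r a1] cntO_le[OF r b1] x_def y_def ..
    have e4: "size (filter_mset (\<lambda>s. s \<le> r) (MO (a+b))) = nat \<lfloor>x + y\<rfloor>"
      unfolding cntO_le[OF r ab1] xy ..
    show "size (filter_mset (\<lambda>s. s < r) (MO a + MO b)) \<le> size (filter_mset (\<lambda>s. s < r) (MO (a+b))) \<and>
          size (filter_mset (\<lambda>s. s \<le> r) (MO (a+b))) \<le> size (filter_mset (\<lambda>s. s \<le> r) (MO a + MO b)) + 1"
      unfolding e1 e2 e3 e4 using c1 c2 p1 p2 p3 p4 by arith
  qed
  then show ?thesis by (intro prec_from_rep[OF rep_mult[OF rep_O[OF a1] rep_O[OF b1]] rep_O[OF ab1]])
qed

lemma claim4b: "OpG (a+b) \<prec>\<^sub>p (EpG a * EpG b :: real poly)"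
proof (cases "a + b = 0")
  case True
  then show ?thesis using rep_real_rooted[OF rep_mult[OF rep_E rep_E]] by (simp add: OpG_0 prec_0_left)
next
  case False
  have ab1: "1 \<le> a + b" using False by auto
  have "cond (MO (a+b)) (ME a + ME b)"
    unfolding cond_def
  proof (intro allI impI)
    fix r :: real assume r: "0 < r" "r < 1/2"
    define x where "x = real a * r"
    define y where "y = real b * r"
    have x0: "0 \<le> x" using r by (simp add: x_def)
    have y0: "0 \<le> y" using r by (simp add: y_def)
    have "0 < real (a+b) * r" using r ab1 by simp
    then have xy0: "0 < x + y" by (simp add: x_def y_def algebra_simps)
    have xy: "real (a+b) * r = x + y" by (simp add: x_def y_def algebra_simps)
    have c1: "\<lceil>x + y - 1\<rceil> \<le> \<lceil>x - 1/2\<rceil> + \<lceil>y - 1/2\<rceil>"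
      using ceiling_add_le[of "x - 1/2" "y - 1/2"] by (simp add: algebra_simps)
    have c1': "\<lceil>x + y - 1\<rceil> = \<lceil>x + y\<rceil> - 1"
      using ceiling_add_of_int[of "x + y" "-1"] by simp
    have c2: "\<lfloor>x - 1/2\<rfloor> + \<lfloor>y - 1/2\<rfloor> \<le> \<lfloor>x + y - 1\<rfloor>"
      using le_floor_add[of "x - 1/2" "y - 1/2"] by (simp add: algebra_simps)
    have c2': "\<lfloor>x + y - 1\<rfloor> = \<lfloor>x + y\<rfloor> - 1"
      using floor_add_int[of "x + y" "-1"] by simp
    have p1: "0 \<le> \<lceil>x - 1/2\<rceil>" using x0 by (simp add: le_ceiling_iff)
    have p2: "0 \<le> \<lceil>y - 1/2\<rceil>" using y0 by (simp add: le_ceiling_iff)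
    have "-1 \<le> \<lfloor>x - 1/2\<rfloor>" using x0 by (simp add: le_floor_iff)
    then have p3: "0 \<le> \<lfloor>x - 1/2\<rfloor> + 1" by linarith
    have "-1 \<le> \<lfloor>y - 1/2\<rfloor>" using y0 by (simp add: le_floor_iff)
    then have p4: "0 \<le> \<lfloor>y - 1/2\<rfloor> + 1" by linarith
    have p5: "1 \<le> \<lceil>x + y\<rceil>" using xy0 by (simp add: le_ceiling_iff)
    have p6: "0 \<le> \<lfloor>x + y\<rfloor>" using xy0 by simp
    have e1: "size (filter_mset (\<lambda>s. s < r) (MO (a+b))) = nat (\<lceil>x + y\<rceil> - 1)"
      unfolding cntO_lt[OF r ab1] xy ..
    have e2: "size (filter_mset (\<lambda>s. s < r) (ME a + ME b)) = nat \<lceil>x - 1/2\<rceil> + nat \<lceil>y - 1/2\<rceil>"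
      unfolding size_filter_plus cntE_lt[OF r] x_def y_def ..
    have e3: "size (filter_mset (\<lambda>s. s \<le> r) (MO (a+b))) = nat \<lfloor>x + y\<rfloor>"
      unfolding cntO_le[OF r ab1] xy ..
    have e4: "size (filter_mset (\<lambda>s. s \<le> r) (ME a + ME b)) = nat (\<lfloor>x - 1/2\<rfloor> + 1) + nat (\<lfloor>y - 1/2\<rfloor> + 1)"
      unfolding size_filter_plus cntE_le[OF r] x_def y_def ..
    show "size (filter_mset (\<lambda>s. s < r) (MO (a+b))) \<le> size (filter_mset (\<lambda>s. s < r) (ME a + ME b)) \<and>
          size (filter_mset (\<lambda>s. s \<le> r) (ME a + ME b)) \<le> size (filter_mset (\<lambda>s. s \<le> r) (MO (a+b))) + 1"
      unfolding e1 e2 e3 e4 using c1 c1' c2 c2' p1 p2 p3 p4 p5 p6 by arith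
  qed
  then show ?thesis by (intro prec_from_rep[OF rep_O[OF ab1] rep_mult[OF rep_E rep_E]])
qed

theorem lemma3p1:
  fixes a b :: nat
  shows "O_poly (a + b) \<prec>\<^sub>p E_poly (a + b) \<and>
         E_poly a * O_poly b \<prec>\<^sub>p E_poly (a + b) \<and>
         O_poly a * E_poly b \<prec>\<^sub>p E_poly (a + b) \<and>
         O_poly a * O_poly b \<prec>\<^sub>p O_poly (a + b) \<and>
         O_poly (a + b) \<prec>\<^sub>p E_poly a * E_poly b"
proof -
  have 1: "OpG (a+b) \<prec>\<^sub>p (EpG (a+b) :: real poly)"
    using claim2[of 0 "a+b"] by (simp add: EpG_0)
  have 3: "OpG a * EpG b \<prec>\<^sub>p (EpG (a+b) :: real poly)"
    using claim2[of b a] by (simp add: mult.commute add.commute)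
  show ?thesis unfolding E_poly_eq O_poly_eq
    using 1 3 claim2[of a b] claim4a[of a b] claim4b[of a b] by blast
qed

end
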